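(* Let $\Lambda\in\mathbb{R}$, $\mathfrak{e}>0$, $\mathfrak{q}\in(0,1]$, $r_+>0$, $Q_{\max}>0$ and $K>0$, and assume $\Lambda r_+^2<3$. Let $r\in C^1([0,1];(0,\infty))$, $Q\in C^0([0,1];\mathbb{R})$ and $h\in C^1([0,1];\mathbb{R})$ satisfy: (i) $r_+/2\le r(V)\le r_+$ for all $V\in[0,1]$; (ii) $|Q(V)|\le \mathfrak{q}\,Q_{\max}$ for all $V\in[0,1]$; (iii) $\partial_V\big(r\,h\big)=-\tfrac14\Big(1-\tfrac{Q^2}{r^2}-\Lambda r^2\Big)$ on $[0,1]$; (iv) $\partial_V r(0)>0$ and $h(0)=\dfrac{\Lambda r(0)^2/3-1}{4\,\partial_V r(0)}$; (v) $\partial_V r(0)\le K\,\mathfrak{q}/\mathfrak{e}$. Then there exists a constant $C>0$ depending only on $K$, $\Lambda r_+^2$ and $Q_{\max}/r_+$ such that, if $\dfrac{\mathfrak{e}\,r_+^2}{\mathfrak{q}\,Q_{\max}}>C$, then $\sup_{V\in[0,1]} h(V)<0$.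
   Context: This abstracts the setting of characteristic gluing for the spherically symmetric Einstein–Maxwell–massless charged scalar field system with cosmological constant $\Lambda$, with metric $-\Omega^2\,dU\,dV+r^2d\omega^2$ in the gauge $\Omega\equiv1$ on the outgoing null cone $\{U=0,\ V\in[0,1]\}$. There $r(V)$ is the area radius along the cone, $h(V)=\partial_U r(0,V)$ is its transverse derivative, $Q(V)$ is the enclosed charge, $\mathfrak{e}$ is the scalar field's charge, $r_+$ is the horizon radius of the target Reissner–Nordström(-(A)dS) black hole, whose charge is $\mathfrak{q}Q_{\max}$ with $Q_{\max}$ the maximal (extremal) charge for its mass and $\Lambda$. Equation (iii) is the wave equation for $r$ (with zero scalar mass) rewritten in terms of $r\,\partial_U r$; condition (iv) expresses vanishing Hawking mass $m=\tfrac r2\big(1+4\partial_Ur\,\partial_Vr/\Omega^2-\Lambda r^2/3\big)$ at the initial sphere $V=0$. The conclusion means there are no antitrapped spheres on the cone. *)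

theory Defs
  imports "HOL-Analysis.Analysis"
begin

end

theory Submission
  imports Defs
begin

lemma deriv_bound_aux:
  fixes f D :: "real \<Rightarrow> real"
  assumes der: "\<forall>V\<in>{0..1}. (f has_real_derivative D V) (at V within {0..1})"
    and bd: "\<forall>V\<in>{0..1}. D V \<le> M" and V: "0 \<le> V" "V \<le> 1"
  shows "f V \<le> f 0 + M * V"
proof -
  have "\<exists>x\<in>{0..V}. f V - f 0 = (\<lambda>t. D x * t) (V - 0)"
  proof (rule mvt_very_simple)
    show "0 \<le> V" using V by simp
    fix x assume "0 \<le> x" "x \<le> V"
    then have "(f has_real_derivative D x) (at x within {0..1})" using der V by auto
    then have "(f has_real_derivative D x) (at x within {0..V})"
      by (rule DERIV_subset) (use V in auto)
    then show "(f has_derivative (\<lambda>t. D x * t)) (at x within {0..V})"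
      by (simp add: has_field_derivative_def)
  qed
  then obtain x where x: "x \<in> {0..V}" "f V - f 0 = D x * V" by auto
  have "D x \<le> M" using bd x V by auto
  then have "D x * V \<le> M * V" using V by (simp add: mult_right_mono)
  then show ?thesis using x by (simp add: algebra_simps)
qed

theorem mainTheorem1:
  fixes K L s :: real
  assumes "K > 0" and "L < 3" and "s > 0"
  shows "\<exists>C>0. \<forall>(\<Lambda>::real) (e::real) (q::real) (rp::real) (Qmax::real)
            (r::real\<Rightarrow>real) (r'::real\<Rightarrow>real) (Q::real\<Rightarrow>real)
            (h::real\<Rightarrow>real) (h'::real\<Rightarrow>real).
     e > 0 \<and> 0 < q \<and> q \<le> 1 \<and> rp > 0 \<and> Qmax > 0 \<and>
     \<Lambda> * rp\<^sup>2 = L \<and> Qmax / rp = s \<and>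
     (\<forall>V\<in>{0..1}. (r has_real_derivative r' V) (at V within {0..1})) \<and>
     continuous_on {0..1} r' \<and> (\<forall>V\<in>{0..1}. r V > 0) \<and>
     continuous_on {0..1} Q \<and>
     (\<forall>V\<in>{0..1}. (h has_real_derivative h' V) (at V within {0..1})) \<and>
     continuous_on {0..1} h' \<and>
     (\<forall>V\<in>{0..1}. rp / 2 \<le> r V \<and> r V \<le> rp) \<and>
     (\<forall>V\<in>{0..1}. \<bar>Q V\<bar> \<le> q * Qmax) \<and>
     (\<forall>V\<in>{0..1}. ((\<lambda>x. r x * h x) has_real_derivative
          (- (1/4) * (1 - (Q V)\<^sup>2 / (r V)\<^sup>2 - \<Lambda> * (r V)\<^sup>2))) (at V within {0..1})) \<and>
     r' 0 > 0 \<and> h 0 = (\<Lambda> * (r 0)\<^sup>2 / 3 - 1) / (4 * r' 0) \<and>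
     r' 0 \<le> K * q / e \<and>
     e * rp\<^sup>2 / (q * Qmax) > C
     \<longrightarrow> (SUP V\<in>{0..1}. h V) < 0"
proof -
  define c where "c = 1 - max L 0 / 3"
  have c: "c > 0" using assms(2) by (simp add: c_def max_def)
  define M where "M = s\<^sup>2 + \<bar>L\<bar>/4"
  define C where "C = 8 * K * (M + 1) / (s * c)"
  have M0: "M \<ge> 0" by (simp add: M_def)
  have "C > 0" using assms c M0 by (simp add: C_def)
  moreover have "\<forall>(\<Lambda>::real) (e::real) (q::real) (rp::real) (Qmax::real)
            (r::real\<Rightarrow>real) (r'::real\<Rightarrow>real) (Q::real\<Rightarrow>real)
            (h::real\<Rightarrow>real) (h'::real\<Rightarrow>real).
     e > 0 \<and> 0 < q \<and> q \<le> 1 \<and> rp > 0 \<and> Qmax > 0 \<and>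
     \<Lambda> * rp\<^sup>2 = L \<and> Qmax / rp = s \<and>
     (\<forall>V\<in>{0..1}. (r has_real_derivative r' V) (at V within {0..1})) \<and>
     continuous_on {0..1} r' \<and> (\<forall>V\<in>{0..1}. r V > 0) \<and>
     continuous_on {0..1} Q \<and>
     (\<forall>V\<in>{0..1}. (h has_real_derivative h' V) (at V within {0..1})) \<and>
     continuous_on {0..1} h' \<and>
     (\<forall>V\<in>{0..1}. rp / 2 \<le> r V \<and> r V \<le> rp) \<and>
     (\<forall>V\<in>{0..1}. \<bar>Q V\<bar> \<le> q * Qmax) \<and>
     (\<forall>V\<in>{0..1}. ((\<lambda>x. r x * h x) has_real_derivative
          (- (1/4) * (1 - (Q V)\<^sup>2 / (r V)\<^sup>2 - \<Lambda> * (r V)\<^sup>2))) (at V within {0..1})) \<and>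
     r' 0 > 0 \<and> h 0 = (\<Lambda> * (r 0)\<^sup>2 / 3 - 1) / (4 * r' 0) \<and>
     r' 0 \<le> K * q / e \<and>
     e * rp\<^sup>2 / (q * Qmax) > C
     \<longrightarrow> (SUP V\<in>{0..1}. h V) < 0"
  proof (intro allI impI, elim conjE)
    fix \<Lambda> e q rp Qmax :: real and r r' Q h h' :: "real \<Rightarrow> real"
    assume e: "e > 0" and q: "0 < q" "q \<le> 1" and rp: "rp > 0" and Qm: "Qmax > 0"
      and L: "\<Lambda> * rp\<^sup>2 = L" and s: "Qmax / rp = s"
      and rb: "\<forall>V\<in>{0..1}. rp / 2 \<le> r V \<and> r V \<le> rp"
      and Qb: "\<forall>V\<in>{0..1}. \<bar>Q V\<bar> \<le> q * Qmax"
      and der: "\<forall>V\<in>{0..1}. ((\<lambda>x. r x * h x) has_real_derivative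
          (- (1/4) * (1 - (Q V)\<^sup>2 / (r V)\<^sup>2 - \<Lambda> * (r V)\<^sup>2))) (at V within {0..1})"
      and r'0: "r' 0 > 0" and h0: "h 0 = (\<Lambda> * (r 0)\<^sup>2 / 3 - 1) / (4 * r' 0)"
      and r'K: "r' 0 \<le> K * q / e"
      and big: "e * rp\<^sup>2 / (q * Qmax) > C"
    have Qmax_eq: "Qmax = s * rp" using s rp by (simp add: field_simps)
    have bigs: "e * rp / q > C * s"
    proof -
      have "e * rp\<^sup>2 / (q * Qmax) = (e * rp / q) / s"
        using Qmax_eq rp q assms(3) by (simp add: field_simps power2_eq_square)
      then have "C < (e * rp / q) / s" using big by simp
      then show ?thesis using pos_less_divide_eq[OF assms(3)] by metis
    qed
    have Dbd: "\<forall>V\<in>{0..1}. - (1/4) * (1 - (Q V)\<^sup>2 / (r V)\<^sup>2 - \<Lambda> * (r V)\<^sup>2) \<le> M"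
    proof
      fix V :: real assume V: "V \<in> {0..1}"
      have r1: "rp/2 \<le> r V" "r V \<le> rp" using rb V by auto
      have rV: "r V > 0" using r1 rp by linarith
      have "\<bar>Q V\<bar> \<le> q * Qmax" using Qb V by auto
      also have "\<dots> \<le> Qmax" using q Qm by simp
      finally have aQ: "\<bar>Q V\<bar> \<le> s * rp" using Qmax_eq by simp
      have "(Q V)\<^sup>2 = \<bar>Q V\<bar>\<^sup>2" by simp
      also have "\<dots> \<le> (s * rp)\<^sup>2" using aQ by (intro power_mono) auto
      also have "\<dots> \<le> (s * (2 * r V))\<^sup>2" using r1 assms(3) rp
        by (intro power_mono) auto
      finally have "(Q V)\<^sup>2 \<le> 4 * s\<^sup>2 * (r V)\<^sup>2" by (simp add: power_mult_distrib)
      then have t1: "(Q V)\<^sup>2 / (r V)\<^sup>2 \<le> 4 * s\<^sup>2" using rV by (simp add: divide_le_eq)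
      have "(r V)\<^sup>2 \<le> rp\<^sup>2" using r1 rV by (intro power_mono) auto
      then have "\<bar>\<Lambda>\<bar> * (r V)\<^sup>2 \<le> \<bar>\<Lambda>\<bar> * rp\<^sup>2" by (intro mult_left_mono) auto
      also have "\<dots> = \<bar>L\<bar>" using L[symmetric] by (simp add: abs_mult)
      finally have "\<Lambda> * (r V)\<^sup>2 \<le> \<bar>L\<bar>"
        using mult_right_mono[OF abs_ge_self zero_le_power2, of \<Lambda> "r V"] by linarith
      then have lb: "\<Lambda> * (r V)\<^sup>2 \<le> \<bar>L\<bar>" .
      have key: "\<And>a b::real. b \<le> \<bar>L\<bar> \<Longrightarrow> a \<le> 4 * s\<^sup>2 \<Longrightarrow> - (1/4) * (1 - a - b) \<le> s\<^sup>2 + \<bar>L\<bar> / 4"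
        by (simp add: field_simps)
      show "- (1/4) * (1 - (Q V)\<^sup>2 / (r V)\<^sup>2 - \<Lambda> * (r V)\<^sup>2) \<le> M"
        using key[OF lb t1] unfolding M_def .
    qed
    have r0: "rp/2 \<le> r 0" "r 0 \<le> rp" using rb by auto
    have num: "\<Lambda> * (r 0)\<^sup>2 / 3 - 1 \<le> - c"
    proof (cases "\<Lambda> \<ge> 0")
      case True
      have "(r 0)\<^sup>2 \<le> rp\<^sup>2" using r0 rp by (intro power_mono) auto
      then have "\<Lambda> * (r 0)\<^sup>2 \<le> L" using L True by (metis mult_left_mono)
      then show ?thesis by (simp add: c_def max_def)
    next
      case False
      then have "\<Lambda> * (r 0)\<^sup>2 \<le> 0" by (simp add: mult_nonpos_nonneg)
      then show ?thesis by (simp add: c_def max_def)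
    qed
    have f0: "r 0 * h 0 \<le> - (M + 1)"
    proof -
      have "r 0 * h 0 = r 0 * (\<Lambda> * (r 0)\<^sup>2 / 3 - 1) / (4 * r' 0)" using h0 by simp
      also have "\<dots> \<le> r 0 * (- c) / (4 * r' 0)"
      proof -
        have "r 0 * (\<Lambda> * (r 0)\<^sup>2 / 3 - 1) \<le> r 0 * (- c)"
          using num r0 rp by (intro mult_left_mono) auto
        then show ?thesis using r'0 by (intro divide_right_mono) auto
      qed
      also have "\<dots> \<le> (rp/2) * (- c) / (4 * (K * q / e))"
      proof -
        have "r 0 * c / (4 * r' 0) \<ge> (rp/2) * c / (4 * (K * q / e))"
        proof (rule frac_le)
          show "0 \<le> r 0 * c" using r0 rp c by simp
          show "rp / 2 * c \<le> r 0 * c" using r0 c by (intro mult_right_mono) auto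
          show "0 < 4 * r' 0" using r'0 by simp
          show "4 * r' 0 \<le> 4 * (K * q / e)" using r'K by simp
        qed
        then show ?thesis by simp
      qed
      also have "\<dots> = - (c / (8 * K)) * (e * rp / q)"
        using assms(1) q e by (simp add: field_simps)
      also have "\<dots> \<le> - (c / (8 * K)) * (C * s)"
        using bigs c assms(1) by (intro mult_left_mono_neg) auto
      also have "\<dots> = - (M + 1)"
        using c assms by (simp add: C_def field_simps)
      finally show ?thesis .
    qed
    have hb: "\<forall>V\<in>{0..1}. h V \<le> - 1 / rp"
    proof
      fix V :: real assume V: "V \<in> {0..1}"
      have "r V * h V \<le> r 0 * h 0 + M * V"
        using deriv_bound_aux[OF der Dbd] V by auto
      also have "\<dots> \<le> - (M + 1) + M" using f0 V M0
        using mult_left_le[of V M] by auto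
      finally have rh: "r V * h V \<le> -1" by simp
      have r1: "rp/2 \<le> r V" "r V \<le> rp" using rb V by auto
      have "h V < 0"
      proof (rule ccontr)
        assume "\<not> h V < 0"
        then have "0 \<le> r V * h V" using r1 rp by simp
        then show False using rh by simp
      qed
      have "rp * h V \<le> r V * h V" using r1 \<open>h V < 0\<close> by (intro mult_right_mono_neg) auto
      then have "rp * h V \<le> -1" using rh by simp
      then show "h V \<le> - 1 / rp" using rp by (simp add: field_simps)
    qed
    have "(SUP V\<in>{0..1}. h V) \<le> - 1 / rp"
      by (rule cSUP_least) (use hb in auto)
    also have "\<dots> < 0" using rp by simp
    finally show "(SUP V\<in>{0..1}. h V) < 0" .
  qed
  ultimately show ?thesis by blast
qed

end
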